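(* Let $U\in\mathbb{R}^{d\times n}$ be a frame, $z\in\mathbb{R}^n_{++}$, $c\in\mathbb{R}^n_+$, let $T\subseteq[n]$ have margin $\gamma$, and let $h:=h^{U,z}_T$. Then for any $\alpha\ge1$ satisfying $0\le h(\alpha)-h(1)\le\gamma$, the scaling $z':=z\circ(1_{\bar T}+\alpha1_T)$ satisfies \[\|\mathrm{lev}^U(z)-c\|_2^2-\|\mathrm{lev}^U(z')-c\|_2^2\ge2\gamma(h(\alpha)-h(1)).\]
   Context: A frame is a full row rank matrix $U=(u_1,\dots,u_n)\in\mathbb{R}^{d\times n}$; $Z=\mathrm{diag}(z)$; $\mathrm{lev}^U_j(z):=z_ju_j^{\mathsf T}(UZU^{\mathsf T})^{-1}u_j$; $\bar T=[n]\setminus T$; $1_T$ is the indicator vector; $\circ$ is the entrywise product. Margin of $T$: the largest $\gamma\ge0$ such that some $\nu\in\mathbb{R}$ satisfies $\max_{j\in T}(\mathrm{lev}^U_j(z)-c_j)\le\nu-\gamma\le\nu+\gamma\le\min_{j\notin T}(\mathrm{lev}^U_j(z)-c_j)$. Progress function: $h^{U,z}_T(\alpha):=\sum_{j\in T}\mathrm{lev}^U_j(z\circ(1_{\bar T}+\alpha1_T))$. *)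

theory Defs
  imports "HOL-Analysis.Analysis"
begin

definition frame :: "real^'n^'d \<Rightarrow> bool" where
  "frame U \<longleftrightarrow> rank U = CARD('d)"

definition diagm :: "real^'n \<Rightarrow> real^'n^'n" where
  "diagm z = (\<chi> i j. if i = j then z $ i else 0)"

definition lev :: "real^'n^'d \<Rightarrow> real^'n \<Rightarrow> real^'n" where
  "lev U z = (\<chi> j. z $ j * (column j U \<bullet> (matrix_inv (U ** diagm z ** transpose U) *v column j U)))"

definition ind :: "'n set \<Rightarrow> real^'n" where
  "ind T = (\<chi> j. if j \<in> T then 1 else 0)"

definition had :: "real^'n \<Rightarrow> real^'n \<Rightarrow> real^'n" where
  "had x y = (\<chi> j. x $ j * y $ j)"

definition margin_ok :: "real^'n^'d \<Rightarrow> real^'n \<Rightarrow> real^'n \<Rightarrow> 'n set \<Rightarrow> real \<Rightarrow> bool" where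
  "margin_ok U z c T \<gamma> \<longleftrightarrow> \<gamma> \<ge> 0 \<and> (\<exists>\<nu>::real.
      (\<forall>j\<in>T. lev U z $ j - c $ j \<le> \<nu> - \<gamma>) \<and> \<nu> - \<gamma> \<le> \<nu> + \<gamma> \<and>
      (\<forall>j\<in>-T. \<nu> + \<gamma> \<le> lev U z $ j - c $ j))"

definition has_margin :: "real^'n^'d \<Rightarrow> real^'n \<Rightarrow> real^'n \<Rightarrow> 'n set \<Rightarrow> real \<Rightarrow> bool" where
  "has_margin U z c T \<gamma> \<longleftrightarrow> margin_ok U z c T \<gamma> \<and> (\<forall>\<gamma>'. margin_ok U z c T \<gamma>' \<longrightarrow> \<gamma>' \<le> \<gamma>)"

definition progress :: "real^'n^'d \<Rightarrow> real^'n \<Rightarrow> 'n set \<Rightarrow> real \<Rightarrow> real" where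
  "progress U z T \<alpha> = (\<Sum>j\<in>T. lev U (had z (ind (-T) + \<alpha> *\<^sub>R ind T)) $ j)"

end

theory Submission
  imports Defs
begin
definition MM :: "real^'n^'d \<Rightarrow> real^'n \<Rightarrow> real^'d^'d" where
  "MM U z = U ** diagm z ** transpose U"

lemma MM_entry: "MM U z $ a $ b = (\<Sum>j\<in>UNIV. U$a$j * z$j * U$b$j)"
  unfolding MM_def diagm_def matrix_matrix_mult_def transpose_def
  by (simp add: if_distrib[of "\<lambda>t. _ * t"] cong: if_cong)

lemma col_inner: "column j U \<bullet> x = (\<Sum>b\<in>UNIV. U$b$j * x$b)"
  by (simp add: column_def inner_vec_def)

lemma MM_mulv: "(MM U z *v x) $ a = (\<Sum>j\<in>UNIV. U$a$j * z$j * (column j U \<bullet> x))"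
proof -
  have "(MM U z *v x) $ a = (\<Sum>b\<in>UNIV. \<Sum>j\<in>UNIV. U$a$j * z$j * U$b$j * x$b)"
    unfolding matrix_vector_mult_def MM_entry by (simp add: sum_distrib_right)
  also have "\<dots> = (\<Sum>j\<in>UNIV. \<Sum>b\<in>UNIV. U$a$j * z$j * U$b$j * x$b)"
    by (rule sum.swap)
  also have "\<dots> = (\<Sum>j\<in>UNIV. U$a$j * z$j * (column j U \<bullet> x))"
    unfolding col_inner sum_distrib_left by (simp add: mult.assoc)
  finally show ?thesis .
qed
lemma MM_qf: "x \<bullet> (MM U z *v x) = (\<Sum>j\<in>UNIV. z$j * (column j U \<bullet> x)^2)"
proof -
  have "x \<bullet> (MM U z *v x) = (\<Sum>a\<in>UNIV. x$a * (\<Sum>j\<in>UNIV. U$a$j * z$j * (column j U \<bullet> x)))"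
    unfolding inner_vec_def MM_mulv by simp
  also have "\<dots> = (\<Sum>j\<in>UNIV. \<Sum>a\<in>UNIV. x$a * (U$a$j * z$j * (column j U \<bullet> x)))"
    unfolding sum_distrib_left by (rule sum.swap)
  also have "\<dots> = (\<Sum>j\<in>UNIV. z$j * (column j U \<bullet> x) * (\<Sum>a\<in>UNIV. U$a$j * x$a))"
    unfolding sum_distrib_left by (intro sum.cong refl) (simp add: mult_ac)
  also have "\<dots> = (\<Sum>j\<in>UNIV. z$j * (column j U \<bullet> x)^2)"
  proof (intro sum.cong refl)
    fix j
    have "(\<Sum>a\<in>UNIV. U$a$j * x$a) = column j U \<bullet> x"
      by (simp add: column_def inner_vec_def mult.commute)
    then show "z$j * (column j U \<bullet> x) * (\<Sum>a\<in>UNIV. U$a$j * x$a) = z$j * (column j U \<bullet> x)^2"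
      by (simp add: power2_eq_square)
  qed
  finally show ?thesis .
qed
lemma MM_sym: "transpose (MM U z) = MM U z"
proof -
  have d: "transpose (diagm z) = diagm z"
    unfolding diagm_def transpose_def by (simp add: vec_eq_iff)
  show ?thesis unfolding MM_def
    by (simp add: matrix_transpose_mul d matrix_mul_assoc)
qed
lemma sym_inner: fixes P :: "real^'d^'d" assumes "transpose P = P" shows "w \<bullet> (P *v v) = v \<bullet> (P *v w)"
proof -
  have "w \<bullet> (P *v v) = (w v* P) \<bullet> v" by (simp add: dot_lmul_matrix)
  also have "\<dots> = (transpose P *v w) \<bullet> v" by simp
  also have "\<dots> = v \<bullet> (P *v w)" using assms by (simp add: inner_commute)
  finally show ?thesis .
qed

lemma key:
  fixes P Q :: "real^'d^'d"
  assumes "\<And>v. v \<bullet> (P *v v) \<ge> 0" "\<And>v. v \<bullet> (P *v v) \<le> v \<bullet> (Q *v v)"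
    "transpose P = P" "P *v y = u" "Q *v x = u"
  shows "u \<bullet> x \<le> u \<bullet> y"
proof -
  have s: "y \<bullet> (P *v x) = x \<bullet> u" using sym_inner[OF assms(3), of y x] assms(4) by simp
  have 1: "x \<bullet> (P *v x) \<le> x \<bullet> u" using assms(2)[of x] assms(5) by simp
  have "0 \<le> (x - y) \<bullet> (P *v (x - y))" by (rule assms(1))
  also have "\<dots> = x \<bullet> (P *v x) - x \<bullet> (P *v y) - y \<bullet> (P *v x) + y \<bullet> (P *v y)"
    by (simp add: matrix_vector_mult_diff_distrib inner_diff_left inner_diff_right)
  also have "\<dots> = x \<bullet> (P *v x) - 2 * (x \<bullet> u) + y \<bullet> u"
    using s assms(4) by simp
  finally show ?thesis using 1 by (simp add: inner_commute)
qed
lemma inv_props: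
  fixes A :: "real^'d^'d"
  assumes "invertible A"
  shows "A ** matrix_inv A = mat 1" "matrix_inv A ** A = mat 1"
  using someI_ex[OF assms[unfolded invertible_def]] unfolding matrix_inv_def by auto

lemma MM_invertible:
  fixes U :: "real^'n^'d"
  assumes "frame U" "\<forall>j. z $ j > 0"
  shows "invertible (MM U z)"
proof -
  have inj: "inj ((*v) (transpose U))"
    using assms(1) unfolding frame_def by (simp add: full_rank_injective[symmetric] rank_transpose)
  have "x = 0" if "MM U z *v x = 0" for x
  proof -
    have "(\<Sum>j\<in>UNIV. z$j * (column j U \<bullet> x)^2) = 0"
      using that MM_qf[of x U z] by simp
    then have "\<forall>j\<in>UNIV. z$j * (column j U \<bullet> x)^2 = 0"
      using sum_nonneg_eq_0_iff[of UNIV "\<lambda>j. z$j * (column j U \<bullet> x)^2"] assms(2)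
      by (simp add: less_imp_le)
    then have "\<forall>j. column j U \<bullet> x = 0" using assms(2) by (metis UNIV_I mult_eq_0_iff order_less_irrefl power_eq_0_iff)
    then have "transpose U *v x = 0 *v 0"
      by (simp add: vec_eq_iff matrix_vector_mult_def transpose_def column_def inner_vec_def mult_ac)
    then show "x = 0" using inj by (metis injD matrix_vector_mult_0_right)
  qed
  then show ?thesis
    by (simp add: invertible_left_inverse matrix_left_invertible_ker)
qed

lemma lev_MM: "lev U z $ j = z $ j * (column j U \<bullet> (matrix_inv (MM U z) *v column j U))"
  by (simp add: lev_def MM_def)

lemma lev_sum:
  fixes U :: "real^'n^'d"
  assumes "invertible (MM U z)"
  shows "(\<Sum>j\<in>UNIV. lev U z $ j) = real CARD('d)"
proof -
  define N where "N = matrix_inv (MM U z)"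
  have "(\<Sum>j\<in>UNIV. lev U z $ j) = (\<Sum>j\<in>UNIV. \<Sum>a\<in>UNIV. \<Sum>b\<in>UNIV. N$a$b * (U$a$j * z$j * U$b$j))"
  proof (intro sum.cong refl)
    fix j
    show "lev U z $ j = (\<Sum>a\<in>UNIV. \<Sum>b\<in>UNIV. N$a$b * (U$a$j * z$j * U$b$j))"
      unfolding lev_MM N_def[symmetric] col_inner matrix_vector_mult_def
      by (simp add: sum_distrib_left mult_ac column_def)
  qed
  also have "\<dots> = (\<Sum>a\<in>UNIV. \<Sum>j\<in>UNIV. \<Sum>b\<in>UNIV. N$a$b * (U$a$j * z$j * U$b$j))"
    by (rule sum.swap)
  also have "\<dots> = (\<Sum>a\<in>UNIV. \<Sum>b\<in>UNIV. \<Sum>j\<in>UNIV. N$a$b * (U$a$j * z$j * U$b$j))"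
    by (intro sum.cong refl sum.swap)
  also have "\<dots> = (\<Sum>a\<in>UNIV. \<Sum>b\<in>UNIV. N$a$b * MM U z $ b $ a)"
    unfolding MM_entry sum_distrib_left by (intro sum.cong refl) (simp add: mult_ac)
  also have "\<dots> = (\<Sum>a\<in>UNIV. (N ** MM U z) $ a $ a)"
    by (simp add: matrix_matrix_mult_def)
  also have "\<dots> = (\<Sum>a\<in>(UNIV::'d set). (1::real))"
    using inv_props(2)[OF assms] unfolding N_def by (simp add: mat_def)
  finally show ?thesis by simp
qed

lemma sum_split_T: "(\<Sum>j\<in>UNIV. f j) = (\<Sum>j\<in>T. f j) + (\<Sum>j\<in>-T. (f j::real))"
  for T :: "'n::finite set"
  by (metis Compl_partition2 finite sum.subset_diff Diff_Compl double_compl add.commute sum.union_disjoint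
      disjoint_eq_subset_Compl order_refl)

lemma final_ineq:
  fixes l l' c :: "real^'n" and T :: "'n set"
  assumes tot: "(\<Sum>j\<in>UNIV. l$j) = (\<Sum>j\<in>UNIV. l'$j)"
    and monT: "\<forall>j\<in>T. l$j \<le> l'$j" and monN: "\<forall>j\<in>-T. l'$j \<le> l$j"
    and mT: "\<forall>j\<in>T. l$j - c$j \<le> \<nu> - \<gamma>" and mN: "\<forall>j\<in>-T. \<nu> + \<gamma> \<le> l$j - c$j"
    and D: "\<Delta> = (\<Sum>j\<in>T. l'$j) - (\<Sum>j\<in>T. l$j)" and Dg: "\<Delta> \<le> \<gamma>"
  shows "(norm (l - c))\<^sup>2 - (norm (l' - c))\<^sup>2 \<ge> 2 * \<gamma> * \<Delta>"
proof -
  define d where "d j = l'$j - l$j" for j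
  define a where "a j = l$j - c$j" for j
  have DT: "(\<Sum>j\<in>T. d j) = \<Delta>" using D by (simp add: d_def sum_subtractf)
  have "(\<Sum>j\<in>UNIV. d j) = 0" using tot by (simp add: d_def sum_subtractf)
  then have DN: "(\<Sum>j\<in>-T. - d j) = \<Delta>" using DT sum_split_T[of d T] by (simp add: sum_negf)
  have dT: "0 \<le> d j" "d j \<le> \<Delta>" if "j \<in> T" for j
  proof -
    show "0 \<le> d j" using monT that by (simp add: d_def)
    have "d j \<le> (\<Sum>j\<in>T. d j)"
      by (rule member_le_sum) (use that monT d_def in auto)
    then show "d j \<le> \<Delta>" using DT by simp
  qed
  have dN: "0 \<le> - d j" "- d j \<le> \<Delta>" if "j \<in> -T" for j
  proof -
    show "0 \<le> - d j" using monN that by (simp add: d_def)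
    have "- d j \<le> (\<Sum>j\<in>-T. - d j)"
      by (rule member_le_sum) (use that monN d_def in auto)
    then show "- d j \<le> \<Delta>" using DN by simp
  qed
  have eq: "(norm (l - c))\<^sup>2 - (norm (l' - c))\<^sup>2 = (\<Sum>j\<in>UNIV. -2 * a j * d j - (d j)^2)"
    unfolding power2_norm_eq_inner inner_vec_def
    by (simp add: a_def d_def sum_subtractf[symmetric] power2_eq_square algebra_simps)
  have fT: "-2 * a j * d j - (d j)^2 \<ge> -2 * (\<nu> - \<gamma>) * d j - \<Delta> * d j" if "j \<in> T" for j
  proof -
    have "a j * d j \<le> (\<nu> - \<gamma>) * d j" using mT that dT(1)[OF that] by (simp add: a_def mult_right_mono)
    moreover have "d j * d j \<le> \<Delta> * d j" using dT[OF that] by (simp add: mult_right_mono)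
    ultimately show ?thesis by (simp add: power2_eq_square algebra_simps)
  qed
  have fN: "-2 * a j * d j - (d j)^2 \<ge> -2 * (\<nu> + \<gamma>) * d j + \<Delta> * d j" if "j \<in> -T" for j
  proof -
    have "(\<nu> + \<gamma>) * (- d j) \<le> a j * (- d j)" using mN that dN(1)[OF that] unfolding a_def by (intro mult_right_mono) auto
    moreover have "(- d j) * (- d j) \<le> \<Delta> * (- d j)" using dN[OF that] by (intro mult_right_mono) auto
    ultimately show ?thesis by (simp add: power2_eq_square algebra_simps)
  qed
  have sT: "(\<Sum>j\<in>T. -2 * a j * d j - (d j)^2) \<ge> -2 * (\<nu> - \<gamma>) * \<Delta> - \<Delta> * \<Delta>"
  proof -
    have "(\<Sum>j\<in>T. -2 * a j * d j - (d j)^2) \<ge> (\<Sum>j\<in>T. -2 * (\<nu> - \<gamma>) * d j - \<Delta> * d j)"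
      by (rule sum_mono) (rule fT)
    also have "(\<Sum>j\<in>T. -2 * (\<nu> - \<gamma>) * d j - \<Delta> * d j) = -2 * (\<nu> - \<gamma>) * \<Delta> - \<Delta> * \<Delta>"
      using DT by (simp add: sum_subtractf sum_distrib_left[symmetric])
    finally show ?thesis .
  qed
  have sN: "(\<Sum>j\<in>-T. -2 * a j * d j - (d j)^2) \<ge> 2 * (\<nu> + \<gamma>) * \<Delta> - \<Delta> * \<Delta>"
  proof -
    have "(\<Sum>j\<in>-T. -2 * a j * d j - (d j)^2) \<ge> (\<Sum>j\<in>-T. 2 * (\<nu> + \<gamma>) * (- d j) - \<Delta> * (- d j))"
      by (rule sum_mono) (use fN in \<open>auto simp: algebra_simps\<close>)
    also have "(\<Sum>j\<in>-T. 2 * (\<nu> + \<gamma>) * (- d j) - \<Delta> * (- d j)) = (\<Sum>j\<in>-T. (2 * (\<nu> + \<gamma>) - \<Delta>) * (- d j))"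
      by (intro sum.cong refl) (simp add: algebra_simps)
    also have "\<dots> = (2 * (\<nu> + \<gamma>) - \<Delta>) * (\<Sum>j\<in>-T. - d j)"
      by (simp only: sum_distrib_left)
    also have "\<dots> = 2 * (\<nu> + \<gamma>) * \<Delta> - \<Delta> * \<Delta>"
      using DN by (simp add: algebra_simps)
    finally show ?thesis .
  qed
  have "\<Delta> \<ge> 0" using DT dT(1) by (metis sum_nonneg)
  then have "\<Delta> * \<Delta> \<le> \<gamma> * \<Delta>" using Dg by (simp add: mult_right_mono)
  then have e: "-2 * (\<nu> - \<gamma>) * \<Delta> - \<Delta> * \<Delta> + (2 * (\<nu> + \<gamma>) * \<Delta> - \<Delta> * \<Delta>) \<ge> 2 * \<gamma> * \<Delta>"
    by (simp add: algebra_simps)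
  show ?thesis using e eq sT sN sum_split_T[of "\<lambda>j. -2 * a j * d j - (d j)^2" T] by linarith
qed

theorem lemma2p11:
  fixes U :: "real^'n^'d" and z c :: "real^'n" and T :: "'n set" and \<gamma> \<alpha> :: real
  assumes "frame U"
    and "\<forall>j. z $ j > 0"
    and "\<forall>j. c $ j \<ge> 0"
    and "has_margin U z c T \<gamma>"
    and "\<alpha> \<ge> 1"
    and "0 \<le> progress U z T \<alpha> - progress U z T 1"
    and "progress U z T \<alpha> - progress U z T 1 \<le> \<gamma>"
  shows "(norm (lev U z - c))\<^sup>2
           - (norm (lev U (had z (ind (-T) + \<alpha> *\<^sub>R ind T)) - c))\<^sup>2
         \<ge> 2 * \<gamma> * (progress U z T \<alpha> - progress U z T 1)"
proof -
  define z' where "z' = had z (ind (-T) + \<alpha> *\<^sub>R ind T)"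
  define w :: "real^'n" where "w = (\<chi> j. if j \<in> T then z$j else z$j / \<alpha>)"
  have z'j: "z' $ j = (if j \<in> T then \<alpha> * z$j else z$j)" for j
    by (simp add: z'_def had_def ind_def)
  have z1: "had z (ind (-T) + 1 *\<^sub>R ind T) = z"
    by (simp add: vec_eq_iff had_def ind_def)
  have apos: "\<alpha> > 0" using assms(5) by simp
  have z'pos: "\<forall>j. z'$j > 0" using assms(2) apos by (simp add: z'j)
  have wpos: "\<forall>j. w$j > 0" using assms(2) apos by (simp add: w_def)
  have invz: "invertible (MM U z)" by (rule MM_invertible[OF assms(1,2)])
  have invz': "invertible (MM U z')" by (rule MM_invertible[OF assms(1) z'pos])
  define N where "N = matrix_inv (MM U z)"
  define N' where "N' = matrix_inv (MM U z')"
  have Nsol: "MM U z *v (N *v u) = u" for u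
    using inv_props(1)[OF invz] by (simp add: N_def matrix_vector_mul_assoc)
  have N'sol: "MM U z' *v (N' *v u) = u" for u
    using inv_props(1)[OF invz'] by (simp add: N'_def matrix_vector_mul_assoc)
  have Mzw: "MM U z' = \<alpha> *\<^sub>R MM U w"
    using apos by (simp add: vec_eq_iff MM_entry sum_distrib_left, intro allI sum.cong refl)
      (simp add: z'j w_def mult_ac)
  have psd: "\<And>v. v \<bullet> (MM U y *v v) \<ge> 0" if "\<forall>j. y$j > 0" for y
    using that by (simp add: MM_qf sum_nonneg less_imp_le)
  have le: "v \<bullet> (MM U y *v v) \<le> v \<bullet> (MM U y' *v v)" if "\<forall>j. y$j \<le> y'$j" for y y' v
    unfolding MM_qf using that by (intro sum_mono mult_right_mono) auto
  let ?l = "lev U z" and ?l' = "lev U z'"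
  have monN: "\<forall>j\<in>-T. ?l'$j \<le> ?l$j"
  proof
    fix j assume j: "j \<in> -T"
    have "column j U \<bullet> (N' *v column j U) \<le> column j U \<bullet> (N *v column j U)"
      by (rule key[OF psd[OF assms(2)] le MM_sym Nsol N'sol]) (use assms(5) assms(2) in \<open>auto simp: z'j\<close>)
    then show "?l'$j \<le> ?l$j" using j assms(2)
      by (simp add: lev_MM N_def[symmetric] N'_def[symmetric] z'j mult_left_mono less_imp_le)
  qed
  have monT: "\<forall>j\<in>T. ?l$j \<le> ?l'$j"
  proof
    fix j assume j: "j \<in> T"
    have sol: "MM U w *v (\<alpha> *\<^sub>R (N' *v column j U)) = column j U"
      using N'sol[of "column j U"] apos unfolding Mzw
      by (metis matrix_vector_mult_scaleR scaleR_matrix_vector_assoc)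
    have "column j U \<bullet> (N *v column j U) \<le> column j U \<bullet> (\<alpha> *\<^sub>R (N' *v column j U))"
      by (rule key[OF psd[OF wpos] le MM_sym sol Nsol]) (use assms(2) apos assms(5) in \<open>auto simp: w_def divide_le_eq\<close>)
    then show "?l$j \<le> ?l'$j" using j assms(2)
      by (simp add: lev_MM N_def[symmetric] N'_def[symmetric] z'j mult_left_mono less_imp_le mult_ac)
  qed
  obtain \<nu> where mT: "\<forall>j\<in>T. ?l$j - c$j \<le> \<nu> - \<gamma>" and mN: "\<forall>j\<in>-T. \<nu> + \<gamma> \<le> ?l$j - c$j"
    using assms(4) unfolding has_margin_def margin_ok_def by blast
  have tot: "(\<Sum>j\<in>UNIV. ?l$j) = (\<Sum>j\<in>UNIV. ?l'$j)"
    using lev_sum[OF invz] lev_sum[OF invz'] by simp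
  have D: "progress U z T \<alpha> - progress U z T 1 = (\<Sum>j\<in>T. ?l'$j) - (\<Sum>j\<in>T. ?l$j)"
    unfolding progress_def z1 z'_def ..
  show ?thesis
    unfolding z'_def[symmetric]
    by (rule final_ineq[OF tot monT monN mT mN D assms(7)])
qed

end
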